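(* Let $\mathcal{Q}_d,\mathcal{Q}_e,\mathcal{Q}_{\mathrm{eval}}$ be quantales with operations $\odot_d,\odot_e,\odot_{\mathrm{eval}}$, and let $\phi_d:\mathcal{Q}_d\to\mathcal{Q}_{\mathrm{eval}}$, $\phi_e:\mathcal{Q}_e\to\mathcal{Q}_{\mathrm{eval}}$ be lax functions. Then: (i) (Heterogeneous series) Let $\mathcal{R}$ be a $\mathcal{Q}_d$-category, $\mathcal{F}$ a $\mathcal{Q}_e$-category, and $\mathcal{M}$ a set of objects carrying both a $\mathcal{Q}_d$-category structure and a $\mathcal{Q}_e$-category structure; let $d:\mathcal{R}\nrightarrow_{\mathcal{Q}_d}\mathcal{M}$ be a $\mathcal{Q}_d$-design problem and $e:\mathcal{M}\nrightarrow_{\mathcal{Q}_e}\mathcal{F}$ a $\mathcal{Q}_e$-design problem. Then $(d;e)(r,f):=\bigsqcup_{m\in\mathcal{M}}\phi_d(d(r,m))\odot_{\mathrm{eval}}\phi_e(e(m,f))$ is a $\mathcal{Q}_{\mathrm{eval}}$-design problem $(\phi_d)_\ast\mathcal{R}\nrightarrow(\phi_e)_\ast\mathcal{F}$. (ii) (Heterogeneous parallel) If $d:\mathcal{R}\nrightarrow_{\mathcal{Q}_d}\mathcal{F}$ is a $\mathcal{Q}_d$-design problem and $e:\mathcal{R}'\nrightarrow_{\mathcal{Q}_e}\mathcal{F}'$ is a $\mathcal{Q}_e$-design problem, then $(d\otimes e)((r,r'),(f,f')):=\phi_d(d(r,f))\odot_{\mathrm{eval}}\phi_e(e(r',f'))$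 is a $\mathcal{Q}_{\mathrm{eval}}$-design problem $(\phi_d)_\ast\mathcal{R}\otimes(\phi_e)_\ast\mathcal{R}'\nrightarrow(\phi_d)_\ast\mathcal{F}\otimes(\phi_e)_\ast\mathcal{F}'$. (iii) (Heterogeneous feedback) If $\mathcal{R},\mathcal{F},\mathcal{M}$ are $\mathcal{Q}_d$-categories and $d:\mathcal{R}\otimes\mathcal{M}\nrightarrow_{\mathcal{Q}_d}\mathcal{F}\otimes\mathcal{M}$ is a $\mathcal{Q}_d$-design problem, then $\mathrm{Tr}_{\mathcal{M}}(d)(r,f):=\bigsqcup_{m,m'\in\mathcal{M}}\phi_d(d((r,m),(f,m')))\odot_{\mathrm{eval}}\phi_d(\mathcal{M}(m,m'))$ is a $\mathcal{Q}_{\mathrm{eval}}$-design problem $(\phi_d)_\ast\mathcal{R}\nrightarrow(\phi_d)_\ast\mathcal{F}$.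
   Context: A quantale $(Q,\sqsubseteq,\odot,e)$ is a complete lattice (arbitrary joins $\bigsqcup$) with an associative, commutative operation $\odot$ with unit $e$ distributing over arbitrary joins. A $\mathcal{Q}$-category $\mathcal{C}$ is a set $\mathrm{Ob}(\mathcal{C})$ with values $\mathcal{C}(x,y)\in Q$ such that $e\sqsubseteq\mathcal{C}(x,x)$ and $\mathcal{C}(x,y)\odot\mathcal{C}(y,z)\sqsubseteq\mathcal{C}(x,z)$. The tensor product $\mathcal{C}\otimes\mathcal{D}$ of $\mathcal{Q}$-categories has objects $\mathrm{Ob}(\mathcal{C})\times\mathrm{Ob}(\mathcal{D})$ and values $\mathcal{C}(c,c')\odot\mathcal{D}(d,d')$. A $\mathcal{Q}$-design problem $d:\mathcal{R}\nrightarrow_{\mathcal{Q}}\mathcal{F}$ between $\mathcal{Q}$-categories is a function $d:\mathrm{Ob}(\mathcal{R})\times\mathrm{Ob}(\mathcal{F})\to Q$ with $\mathcal{F}(f^\ast,f)\odot d(r,f)\odot\mathcal{R}(r,r^\ast)\sqsubseteq d(r^\ast,f^\ast)$ for all $f,f^\ast\in\mathcal{F}$, $r,r^\ast\in\mathcal{R}$. A lax function $\phi:(Q,\sqsubseteq,\odot,e)\to(Q',\sqsubseteq',\odot',e')$ is a monotone map with $\phi(q_1)\odot'\phi(q_2)\sqsubseteq'\phi(q_1\odot q_2)$ and $e'\sqsubseteq'\phi(e)$. For a $\mathcal{Q}$-category $\mathcal{C}$ and lax $\phi:\mathcal{Q}\to\mathcal{Q}'$, the pushforward $\phi_\ast\mathcal{C}$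 is the $\mathcal{Q}'$-category with the same objects and values $\phi(\mathcal{C}(x,y))$. *)

theory Defs
  imports Main
begin

definition quantale :: "('q::complete_lattice \<Rightarrow> 'q \<Rightarrow> 'q) \<Rightarrow> 'q \<Rightarrow> bool" where
  "quantale op u \<longleftrightarrow>
     (\<forall>a b c. op (op a b) c = op a (op b c)) \<and>
     (\<forall>a b. op a b = op b a) \<and>
     (\<forall>a. op u a = a) \<and>
     (\<forall>a S. op a (Sup S) = (SUP s\<in>S. op a s))"

definition qcat :: "('q::complete_lattice \<Rightarrow> 'q \<Rightarrow> 'q) \<Rightarrow> 'q \<Rightarrow> 'a set \<Rightarrow> ('a \<Rightarrow> 'a \<Rightarrow> 'q) \<Rightarrow> bool" where
  "qcat op u Ob C \<longleftrightarrow>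
     (\<forall>x\<in>Ob. u \<le> C x x) \<and>
     (\<forall>x\<in>Ob. \<forall>y\<in>Ob. \<forall>z\<in>Ob. op (C x y) (C y z) \<le> C x z)"

definition qtensor :: "('q \<Rightarrow> 'q \<Rightarrow> 'q) \<Rightarrow> ('a \<Rightarrow> 'a \<Rightarrow> 'q) \<Rightarrow> ('b \<Rightarrow> 'b \<Rightarrow> 'q)
    \<Rightarrow> ('a \<times> 'b \<Rightarrow> 'a \<times> 'b \<Rightarrow> 'q)" where
  "qtensor op C D = (\<lambda>(c, d) (c', d'). op (C c c') (D d d'))"

definition pushforward :: "('q \<Rightarrow> 'q') \<Rightarrow> ('a \<Rightarrow> 'a \<Rightarrow> 'q) \<Rightarrow> ('a \<Rightarrow> 'a \<Rightarrow> 'q')" where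
  "pushforward \<phi> C = (\<lambda>x y. \<phi> (C x y))"

definition design_problem ::
  "('q::complete_lattice \<Rightarrow> 'q \<Rightarrow> 'q) \<Rightarrow> 'q \<Rightarrow> 'r set \<Rightarrow> ('r \<Rightarrow> 'r \<Rightarrow> 'q)
    \<Rightarrow> 'f set \<Rightarrow> ('f \<Rightarrow> 'f \<Rightarrow> 'q) \<Rightarrow> ('r \<Rightarrow> 'f \<Rightarrow> 'q) \<Rightarrow> bool" where
  "design_problem op u RO R FO F d \<longleftrightarrow>
     qcat op u RO R \<and> qcat op u FO F \<and>
     (\<forall>f\<in>FO. \<forall>f'\<in>FO. \<forall>r\<in>RO. \<forall>r'\<in>RO. op (op (F f' f) (d r f)) (R r r') \<le> d r' f')"

definition lax_fun ::
  "('q::complete_lattice \<Rightarrow> 'q \<Rightarrow> 'q) \<Rightarrow> 'q \<Rightarrow> ('p::complete_lattice \<Rightarrow> 'p \<Rightarrow> 'p) \<Rightarrow> 'p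
    \<Rightarrow> ('q \<Rightarrow> 'p) \<Rightarrow> bool" where
  "lax_fun op u op' u' \<phi> \<longleftrightarrow>
     mono \<phi> \<and> (\<forall>a b. op' (\<phi> a) (\<phi> b) \<le> \<phi> (op a b)) \<and> u' \<le> \<phi> u"

end

theory Submission
  imports Defs
begin


lemma q_abel: "quantale op u \<Longrightarrow> abel_semigroup op"
  unfolding quantale_def by unfold_locales auto

lemma q_unitr: "quantale op u \<Longrightarrow> op a u = a"
  unfolding quantale_def by metis

lemma q_unitl: "quantale op u \<Longrightarrow> op u a = a"
  unfolding quantale_def by metis

lemma q_SUP_right: "quantale op u \<Longrightarrow> op a (SUP s\<in>S. f s) = (SUP s\<in>S. op a (f s))"
  unfolding quantale_def by (simp add: image_image)

lemma q_SUP_left: "quantale op u \<Longrightarrow> op (SUP s\<in>S. f s) a = (SUP s\<in>S. op (f s) a)"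
proof -
  assume q: "quantale op u"
  have c: "\<And>x y. op x y = op y x" using q unfolding quantale_def by blast
  show ?thesis using q_SUP_right[OF q, where a=a and S=S and f=f] by (simp add: c)
qed

lemma q_mono1: "quantale op u \<Longrightarrow> b \<le> c \<Longrightarrow> op a b \<le> op a c"
proof -
  assume q: "quantale op u" and bc: "b \<le> c"
  have "op a (Sup {b, c}) = (SUP s\<in>{b,c}. op a s)" using q unfolding quantale_def by blast
  hence "op a c = sup (op a b) (op a c)" using bc by (simp add: sup_absorb2)
  thus ?thesis by (metis sup.cobounded1)
qed

lemma q_mono: "quantale op u \<Longrightarrow> a \<le> b \<Longrightarrow> c \<le> d \<Longrightarrow> op a c \<le> op b d"
proof -
  assume q: "quantale op u" and ab: "a \<le> b" and cd: "c \<le> d"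
  have c: "\<And>x y. op x y = op y x" using q unfolding quantale_def by blast
  have "op a c \<le> op a d" by (rule q_mono1[OF q cd])
  also have "\<dots> = op d a" by (rule c)
  also have "\<dots> \<le> op d b" by (rule q_mono1[OF q ab])
  also have "\<dots> = op b d" by (rule c)
  finally show ?thesis .
qed

lemma qcat_push: "lax_fun op u op' u' \<phi> \<Longrightarrow> qcat op u Ob C \<Longrightarrow> qcat op' u' Ob (pushforward \<phi> C)"
  unfolding lax_fun_def qcat_def pushforward_def
  by (meson monoD order_trans)

lemma qcat_tensor:
  assumes q: "quantale op u" and A: "qcat op u A C" and B: "qcat op u B D"
  shows "qcat op u (A \<times> B) (qtensor op C D)"
proof -
  interpret abel_semigroup op by (rule q_abel[OF q])
  have 1: "u \<le> op (C x x) (D y y)" if "x \<in> A" "y \<in> B" for x y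
  proof -
    have "u \<le> C x x" "u \<le> D y y" using A B that unfolding qcat_def by auto
    hence "op u u \<le> op (C x x) (D y y)" by (rule q_mono[OF q])
    thus ?thesis using q_unitl[OF q] by simp
  qed
  have 2: "op (op (C a1 a2) (D b1 b2)) (op (C a2 a3) (D b2 b3)) \<le> op (C a1 a3) (D b1 b3)"
    if m: "a1 \<in> A" "a2 \<in> A" "a3 \<in> A" "b1 \<in> B" "b2 \<in> B" "b3 \<in> B" for a1 a2 a3 b1 b2 b3
  proof -
    have "op (op (C a1 a2) (D b1 b2)) (op (C a2 a3) (D b2 b3))
        = op (op (C a1 a2) (C a2 a3)) (op (D b1 b2) (D b2 b3))" by (simp add: ac_simps)
    also have "\<dots> \<le> op (C a1 a3) (D b1 b3)"
      using m A B unfolding qcat_def by (intro q_mono[OF q]) auto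
    finally show ?thesis .
  qed
  show ?thesis unfolding qcat_def qtensor_def using 1 2 by auto
qed

lemma lax_parts:
  assumes "lax_fun op u op' u' \<phi>"
  shows "mono \<phi>" "\<And>a b. op' (\<phi> a) (\<phi> b) \<le> \<phi> (op a b)" "u' \<le> \<phi> u"
  using assms unfolding lax_fun_def by auto

lemma part1:
  fixes opd :: "'qd::complete_lattice \<Rightarrow> 'qd \<Rightarrow> 'qd" and ud :: 'qd
    and ope :: "'qe::complete_lattice \<Rightarrow> 'qe \<Rightarrow> 'qe" and ue :: 'qe
    and opv :: "'qv::complete_lattice \<Rightarrow> 'qv \<Rightarrow> 'qv" and uv :: 'qv
  assumes Qd: "quantale opd ud" and Qe: "quantale ope ue" and Qv: "quantale opv uv"
    and lax_d: "lax_fun opd ud opv uv \<phi>d" and lax_e: "lax_fun ope ue opv uv \<phi>e"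
    and R: "qcat opd ud RO R" and F: "qcat ope ue FO F"
    and Dd: "design_problem opd ud RO R MO Md d"
    and De: "design_problem ope ue MO Me FO F e"
  shows "design_problem opv uv RO (pushforward \<phi>d R) FO (pushforward \<phi>e F)
          (\<lambda>r f. SUP m\<in>MO. opv (\<phi>d (d r m)) (\<phi>e (e m f)))"
proof -
  interpret v: abel_semigroup opv by (rule q_abel[OF Qv])
  note ld = lax_parts[OF lax_d] and le = lax_parts[OF lax_e]
  have key: "opv (opv (\<phi>e (F f' f)) (opv (\<phi>d (d r m)) (\<phi>e (e m f)))) (\<phi>d (R r r'))
      \<le> opv (\<phi>d (d r' m)) (\<phi>e (e m f'))"
    if "f \<in> FO" "f' \<in> FO" "r \<in> RO" "r' \<in> RO" "m \<in> MO" for f f' r r' m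
  proof -
    have md: "ud \<le> Md m m" using Dd that unfolding design_problem_def qcat_def by auto
    have me: "ue \<le> Me m m" using De that unfolding design_problem_def qcat_def by auto
    have d1: "opd (d r m) (R r r') \<le> d r' m"
    proof -
      have "opd (d r m) (R r r') = opd (opd ud (d r m)) (R r r')" using q_unitl[OF Qd] by simp
      also have "\<dots> \<le> opd (opd (Md m m) (d r m)) (R r r')"
        by (intro q_mono[OF Qd] md order_refl)
      also have "\<dots> \<le> d r' m" using Dd that unfolding design_problem_def by auto
      finally show ?thesis .
    qed
    have e1: "ope (F f' f) (e m f) \<le> e m f'"
    proof -
      have "ope (F f' f) (e m f) = ope (ope (F f' f) (e m f)) ue" using q_unitr[OF Qe] by simp
      also have "\<dots> \<le> ope (ope (F f' f) (e m f)) (Me m m)"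
        by (intro q_mono[OF Qe] me order_refl)
      also have "\<dots> \<le> e m f'" using De that unfolding design_problem_def by auto
      finally show ?thesis .
    qed
    have "opv (opv (\<phi>e (F f' f)) (opv (\<phi>d (d r m)) (\<phi>e (e m f)))) (\<phi>d (R r r'))
        = opv (opv (\<phi>d (d r m)) (\<phi>d (R r r'))) (opv (\<phi>e (F f' f)) (\<phi>e (e m f)))"
      by (simp add: ac_simps)
    also have "\<dots> \<le> opv (\<phi>d (opd (d r m) (R r r'))) (\<phi>e (ope (F f' f) (e m f)))"
      by (intro q_mono[OF Qv] ld(2) le(2))
    also have "\<dots> \<le> opv (\<phi>d (d r' m)) (\<phi>e (e m f'))"
      by (intro q_mono[OF Qv] monoD[OF ld(1) d1] monoD[OF le(1) e1])
    finally show ?thesis .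
  qed
  show ?thesis unfolding design_problem_def
  proof (intro conjI ballI)
    show "qcat opv uv RO (pushforward \<phi>d R)" by (rule qcat_push[OF lax_d R])
    show "qcat opv uv FO (pushforward \<phi>e F)" by (rule qcat_push[OF lax_e F])
    fix f f' r r' assume that: "f \<in> FO" "f' \<in> FO" "r \<in> RO" "r' \<in> RO"
    show "opv (opv (pushforward \<phi>e F f' f) (SUP m\<in>MO. opv (\<phi>d (d r m)) (\<phi>e (e m f))))
           (pushforward \<phi>d R r r') \<le> (SUP m\<in>MO. opv (\<phi>d (d r' m)) (\<phi>e (e m f')))"
      unfolding pushforward_def q_SUP_right[OF Qv] q_SUP_left[OF Qv]
      by (rule SUP_mono) (use key that in blast)
  qed
qed

lemma part2:
  fixes opd :: "'qd::complete_lattice \<Rightarrow> 'qd \<Rightarrow> 'qd" and ud :: 'qd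
    and ope :: "'qe::complete_lattice \<Rightarrow> 'qe \<Rightarrow> 'qe" and ue :: 'qe
    and opv :: "'qv::complete_lattice \<Rightarrow> 'qv \<Rightarrow> 'qv" and uv :: 'qv
  assumes Qd: "quantale opd ud" and Qe: "quantale ope ue" and Qv: "quantale opv uv"
    and lax_d: "lax_fun opd ud opv uv \<phi>d" and lax_e: "lax_fun ope ue opv uv \<phi>e"
    and Dd: "design_problem opd ud RO R FO F d"
    and De: "design_problem ope ue RO' R' FO' F' e"
  shows "design_problem opv uv (RO \<times> RO') (qtensor opv (pushforward \<phi>d R) (pushforward \<phi>e R'))
          (FO \<times> FO') (qtensor opv (pushforward \<phi>d F) (pushforward \<phi>e F'))
          (\<lambda>(r, r') (f, f'). opv (\<phi>d (d r f)) (\<phi>e (e r' f')))"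
proof -
  interpret v: abel_semigroup opv by (rule q_abel[OF Qv])
  note ld = lax_parts[OF lax_d] and le = lax_parts[OF lax_e]
  have cats: "qcat opd ud RO R" "qcat opd ud FO F" "qcat ope ue RO' R'" "qcat ope ue FO' F'"
    using Dd De unfolding design_problem_def by auto
  have key: "opv (opv (opv (\<phi>d (F f1' f1)) (\<phi>e (F' f2' f2))) (opv (\<phi>d (d r1 f1)) (\<phi>e (e r2 f2))))
        (opv (\<phi>d (R r1 r1')) (\<phi>e (R' r2 r2'))) \<le> opv (\<phi>d (d r1' f1')) (\<phi>e (e r2' f2'))"
    if "f1 \<in> FO" "f1' \<in> FO" "r1 \<in> RO" "r1' \<in> RO" "f2 \<in> FO'" "f2' \<in> FO'" "r2 \<in> RO'" "r2' \<in> RO'"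
    for f1 f1' r1 r1' f2 f2' r2 r2'
  proof -
    have d1: "opd (opd (F f1' f1) (d r1 f1)) (R r1 r1') \<le> d r1' f1'"
      using Dd that unfolding design_problem_def by auto
    have e1: "ope (ope (F' f2' f2) (e r2 f2)) (R' r2 r2') \<le> e r2' f2'"
      using De that unfolding design_problem_def by auto
    have "opv (opv (opv (\<phi>d (F f1' f1)) (\<phi>e (F' f2' f2))) (opv (\<phi>d (d r1 f1)) (\<phi>e (e r2 f2))))
        (opv (\<phi>d (R r1 r1')) (\<phi>e (R' r2 r2')))
      = opv (opv (opv (\<phi>d (F f1' f1)) (\<phi>d (d r1 f1))) (\<phi>d (R r1 r1')))
            (opv (opv (\<phi>e (F' f2' f2)) (\<phi>e (e r2 f2))) (\<phi>e (R' r2 r2')))"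
      by (simp add: ac_simps)
    also have "\<dots> \<le> opv (\<phi>d (opd (opd (F f1' f1) (d r1 f1)) (R r1 r1')))
                       (\<phi>e (ope (ope (F' f2' f2) (e r2 f2)) (R' r2 r2')))"
      by (intro q_mono[OF Qv] order_trans[OF _ ld(2)] order_trans[OF _ le(2)] ld(2) le(2) order_refl)
    also have "\<dots> \<le> opv (\<phi>d (d r1' f1')) (\<phi>e (e r2' f2'))"
      by (intro q_mono[OF Qv] monoD[OF ld(1) d1] monoD[OF le(1) e1])
    finally show ?thesis .
  qed
  show ?thesis unfolding design_problem_def
  proof (intro conjI)
    show "qcat opv uv (RO \<times> RO') (qtensor opv (pushforward \<phi>d R) (pushforward \<phi>e R'))"
      by (intro qcat_tensor[OF Qv] qcat_push[OF lax_d] qcat_push[OF lax_e] cats)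
    show "qcat opv uv (FO \<times> FO') (qtensor opv (pushforward \<phi>d F) (pushforward \<phi>e F'))"
      by (intro qcat_tensor[OF Qv] qcat_push[OF lax_d] qcat_push[OF lax_e] cats)
    show "\<forall>f\<in>FO \<times> FO'. \<forall>f'\<in>FO \<times> FO'. \<forall>r\<in>RO \<times> RO'. \<forall>r'\<in>RO \<times> RO'.
       opv (opv (qtensor opv (pushforward \<phi>d F) (pushforward \<phi>e F') f' f)
          ((\<lambda>(r, r') (f, f'). opv (\<phi>d (d r f)) (\<phi>e (e r' f'))) r f))
         (qtensor opv (pushforward \<phi>d R) (pushforward \<phi>e R') r r')
       \<le> (\<lambda>(r, r') (f, f'). opv (\<phi>d (d r f)) (\<phi>e (e r' f'))) r' f'"
      unfolding qtensor_def pushforward_def using key by auto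
  qed
qed

lemma part3:
  fixes opd :: "'qd::complete_lattice \<Rightarrow> 'qd \<Rightarrow> 'qd" and ud :: 'qd
    and opv :: "'qv::complete_lattice \<Rightarrow> 'qv \<Rightarrow> 'qv" and uv :: 'qv
  assumes Qd: "quantale opd ud" and Qv: "quantale opv uv"
    and lax_d: "lax_fun opd ud opv uv \<phi>d"
    and R: "qcat opd ud RO R" and F: "qcat opd ud FO F" and M: "qcat opd ud MO M"
    and Dd: "design_problem opd ud (RO \<times> MO) (qtensor opd R M) (FO \<times> MO) (qtensor opd F M) d"
  shows "design_problem opv uv RO (pushforward \<phi>d R) FO (pushforward \<phi>d F)
          (\<lambda>r f. SUP p\<in>MO \<times> MO. opv (\<phi>d (d (r, fst p) (f, snd p))) (\<phi>d (M (fst p) (snd p))))"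
proof -
  interpret v: abel_semigroup opv by (rule q_abel[OF Qv])
  interpret dd: abel_semigroup opd by (rule q_abel[OF Qd])
  note ld = lax_parts[OF lax_d]
  have key: "opv (opv (\<phi>d (F f' f)) (opv (\<phi>d (d (r, m) (f, m'))) (\<phi>d (M m m')))) (\<phi>d (R r r'))
      \<le> opv (\<phi>d (d (r', m) (f', m'))) (\<phi>d (M m m'))"
    if "f \<in> FO" "f' \<in> FO" "r \<in> RO" "r' \<in> RO" "m \<in> MO" "m' \<in> MO" for f f' r r' m m'
  proof -
    have mm: "ud \<le> M m m" "ud \<le> M m' m'" using M that unfolding qcat_def by auto
    have d1: "opd (opd (F f' f) (d (r, m) (f, m'))) (R r r') \<le> d (r', m) (f', m')"
    proof -
      have "opd (opd (F f' f) (d (r, m) (f, m'))) (R r r')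
          = opd (opd (opd (F f' f) ud) (d (r, m) (f, m'))) (opd (R r r') ud)"
        using q_unitr[OF Qd] by simp
      also have "\<dots> \<le> opd (opd (opd (F f' f) (M m' m')) (d (r, m) (f, m'))) (opd (R r r') (M m m))"
        by (intro q_mono[OF Qd] mm order_refl)
      also have "\<dots> \<le> d (r', m) (f', m')"
        using Dd that unfolding design_problem_def qtensor_def by fastforce
      finally show ?thesis .
    qed
    have "opv (opv (\<phi>d (F f' f)) (opv (\<phi>d (d (r, m) (f, m'))) (\<phi>d (M m m')))) (\<phi>d (R r r'))
        = opv (opv (opv (\<phi>d (F f' f)) (\<phi>d (d (r, m) (f, m')))) (\<phi>d (R r r'))) (\<phi>d (M m m'))"
      by (simp add: ac_simps)
    also have "\<dots> \<le> opv (\<phi>d (opd (opd (F f' f) (d (r, m) (f, m'))) (R r r'))) (\<phi>d (M m m'))"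
      by (intro q_mono[OF Qv] order_trans[OF _ ld(2)] ld(2) order_refl)
    also have "\<dots> \<le> opv (\<phi>d (d (r', m) (f', m'))) (\<phi>d (M m m'))"
      by (intro q_mono[OF Qv] monoD[OF ld(1) d1] order_refl)
    finally show ?thesis .
  qed
  show ?thesis unfolding design_problem_def
  proof (intro conjI ballI)
    show "qcat opv uv RO (pushforward \<phi>d R)" by (rule qcat_push[OF lax_d R])
    show "qcat opv uv FO (pushforward \<phi>d F)" by (rule qcat_push[OF lax_d F])
    fix f f' r r' assume that: "f \<in> FO" "f' \<in> FO" "r \<in> RO" "r' \<in> RO"
    show "opv (opv (pushforward \<phi>d F f' f) (SUP p\<in>MO \<times> MO. opv (\<phi>d (d (r, fst p) (f, snd p))) (\<phi>d (M (fst p) (snd p)))))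
           (pushforward \<phi>d R r r') \<le> (SUP p\<in>MO \<times> MO. opv (\<phi>d (d (r', fst p) (f', snd p))) (\<phi>d (M (fst p) (snd p))))"
      unfolding pushforward_def q_SUP_right[OF Qv] q_SUP_left[OF Qv]
      by (rule SUP_mono) (use key that in force)
  qed
qed

theorem theorem2:
  fixes opd :: "'qd::complete_lattice \<Rightarrow> 'qd \<Rightarrow> 'qd" and ud :: 'qd
    and ope :: "'qe::complete_lattice \<Rightarrow> 'qe \<Rightarrow> 'qe" and ue :: 'qe
    and opv :: "'qv::complete_lattice \<Rightarrow> 'qv \<Rightarrow> 'qv" and uv :: 'qv
    and \<phi>d :: "'qd \<Rightarrow> 'qv" and \<phi>e :: "'qe \<Rightarrow> 'qv"
  assumes Qd: "quantale opd ud" and Qe: "quantale ope ue" and Qv: "quantale opv uv"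
    and lax_d: "lax_fun opd ud opv uv \<phi>d" and lax_e: "lax_fun ope ue opv uv \<phi>e"
  shows
    \<comment> \<open>(i) heterogeneous series\<close>
    "(\<forall>(RO::'r set) R (FO::'f set) F (MO::'m set) Md Me d e.
        qcat opd ud RO R \<longrightarrow> qcat ope ue FO F \<longrightarrow>
        qcat opd ud MO Md \<longrightarrow> qcat ope ue MO Me \<longrightarrow>
        design_problem opd ud RO R MO Md d \<longrightarrow>
        design_problem ope ue MO Me FO F e \<longrightarrow>
        design_problem opv uv RO (pushforward \<phi>d R) FO (pushforward \<phi>e F)
          (\<lambda>r f. SUP m\<in>MO. opv (\<phi>d (d r m)) (\<phi>e (e m f))))
     \<and>
    \<comment> \<open>(ii) heterogeneous parallel\<close>
     (\<forall>(RO::'r1 set) R (FO::'f1 set) F (RO'::'r2 set) R' (FO'::'f2 set) F' d e.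
        design_problem opd ud RO R FO F d \<longrightarrow>
        design_problem ope ue RO' R' FO' F' e \<longrightarrow>
        design_problem opv uv (RO \<times> RO') (qtensor opv (pushforward \<phi>d R) (pushforward \<phi>e R'))
          (FO \<times> FO') (qtensor opv (pushforward \<phi>d F) (pushforward \<phi>e F'))
          (\<lambda>(r, r') (f, f'). opv (\<phi>d (d r f)) (\<phi>e (e r' f'))))
     \<and>
    \<comment> \<open>(iii) heterogeneous feedback\<close>
     (\<forall>(RO::'r3 set) R (FO::'f3 set) F (MO::'m3 set) M d.
        qcat opd ud RO R \<longrightarrow> qcat opd ud FO F \<longrightarrow> qcat opd ud MO M \<longrightarrow>
        design_problem opd ud (RO \<times> MO) (qtensor opd R M) (FO \<times> MO) (qtensor opd F M) d \<longrightarrow>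
        design_problem opv uv RO (pushforward \<phi>d R) FO (pushforward \<phi>d F)
          (\<lambda>r f. SUP p\<in>MO \<times> MO. opv (\<phi>d (d (r, fst p) (f, snd p))) (\<phi>d (M (fst p) (snd p)))))"
    using part1[OF Qd Qe Qv lax_d lax_e] part2[OF Qd Qe Qv lax_d lax_e] part3[OF Qd Qv lax_d]
  by blast

end
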